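(* Let $F$ be a commutative field and let $k,h,n$ be integers with $1\le k\le h\le n-1$. If $\mathrm{PG}(n,F)$ contains a linear complex of $h$-subspaces having no singular $(h-1)$-subspace, then $\mathrm{PG}(n+k-h,F)$ contains a linear complex of $k$-subspaces having no singular $(k-1)$-subspace.
   Context: A $d$-subspace is a projective subspace of dimension $d$. A linear complex of $h$-subspaces of $\mathrm{PG}(n,F)$ is the set of $h$-subspaces whose Plücker image ($F(v_0\wedge\cdots\wedge v_h)$ for a basis $v_0,\dots,v_h$ of the corresponding subspace of $F^{n+1}$) lies in a fixed hyperplane of $\mathbb P(\bigwedge^{h+1}F^{n+1})$. An $(h-1)$-subspace $U$ is singular for a linear complex $K$ of $h$-subspaces if every $h$-subspace containing $U$ belongs to $K$. *)

theory Defs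
  imports Main "Jordan_Normal_Form.Determinant"
begin

text \<open>Vectors of F^(n+1) are represented as functions nat => F vanishing outside {0..n}.
  A projective d-subspace of PG(n,F) is a (d+1)-dimensional linear subspace of F^(n+1),
  represented as a set of vectors.\<close>

definition in_Fn :: "nat \<Rightarrow> (nat \<Rightarrow> 'a::field) \<Rightarrow> bool" where
  "in_Fn n v \<longleftrightarrow> (\<forall>i>n. v i = 0)"

definition lin_comb :: "(nat \<Rightarrow> 'a::field) list \<Rightarrow> (nat \<Rightarrow> 'a) \<Rightarrow> (nat \<Rightarrow> 'a)" where
  "lin_comb vs c = (\<lambda>i. \<Sum>j<length vs. c j * (vs ! j) i)"

definition lspan :: "(nat \<Rightarrow> 'a::field) list \<Rightarrow> (nat \<Rightarrow> 'a) set" where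
  "lspan vs = {lin_comb vs c | c. True}"

definition lin_indep :: "(nat \<Rightarrow> 'a::field) list \<Rightarrow> bool" where
  "lin_indep vs \<longleftrightarrow> (\<forall>c. lin_comb vs c = (\<lambda>_. 0) \<longrightarrow> (\<forall>j<length vs. c j = 0))"

definition is_basis :: "nat \<Rightarrow> nat \<Rightarrow> (nat \<Rightarrow> 'a::field) list \<Rightarrow> (nat \<Rightarrow> 'a) set \<Rightarrow> bool" where
  "is_basis n d vs W \<longleftrightarrow> length vs = d + 1 \<and> (\<forall>v\<in>set vs. in_Fn n v) \<and> lin_indep vs \<and> W = lspan vs"

definition proj_subspace :: "nat \<Rightarrow> nat \<Rightarrow> (nat \<Rightarrow> 'a::field) set \<Rightarrow> bool" where
  "proj_subspace n d W \<longleftrightarrow> (\<exists>vs. is_basis n d vs W)"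

text \<open>Pluecker coordinate of v_0 wedge ... wedge v_h with respect to the standard basis
  e_S of the exterior power (S a (h+1)-subset of {0..n}, listed increasingly):
  the maximal minor of the coordinate matrix on the columns S.\<close>
definition pluecker :: "(nat \<Rightarrow> 'a::field) list \<Rightarrow> nat set \<Rightarrow> 'a" where
  "pluecker vs S = det (mat (length vs) (length vs)
      (\<lambda>(i, j). (vs ! i) (sorted_list_of_set S ! j)))"

definition wedge_index :: "nat \<Rightarrow> nat \<Rightarrow> nat set set" where
  "wedge_index n h = {S. S \<subseteq> {..n} \<and> card S = h + 1}"

text \<open>A linear complex of h-subspaces of PG(n,F): the h-subspaces whose Pluecker image lies in
  the hyperplane  sum_S c_S x_S = 0  of P(wedge^(h+1) F^(n+1)), c a nonzero coefficient vector.\<close>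
definition linear_complex :: "nat \<Rightarrow> nat \<Rightarrow> (nat \<Rightarrow> 'a::field) set set \<Rightarrow> bool" where
  "linear_complex n h K \<longleftrightarrow>
     (\<exists>c :: nat set \<Rightarrow> 'a.
        (\<exists>S\<in>wedge_index n h. c S \<noteq> 0) \<and>
        K = {W. \<exists>vs. is_basis n h vs W \<and> (\<Sum>S\<in>wedge_index n h. c S * pluecker vs S) = 0})"

definition singular :: "nat \<Rightarrow> nat \<Rightarrow> (nat \<Rightarrow> 'a::field) set set \<Rightarrow> (nat \<Rightarrow> 'a) set \<Rightarrow> bool" where
  "singular n h K U \<longleftrightarrow> proj_subspace n (h - 1) U \<and>
     (\<forall>W. proj_subspace n h W \<and> U \<subseteq> W \<longrightarrow> W \<in> K)"

end

theory Submission
  imports Defs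
begin

lemma lin_comb_append:
  "lin_comb (xs @ [x]) c = (\<lambda>i. lin_comb xs c i + c (length xs) * x i)"
  unfolding lin_comb_def by (auto simp: nth_append)

lemma lin_comb_cong:
  "(\<And>j. j < length vs \<Longrightarrow> c j = d j) \<Longrightarrow> lin_comb vs c = lin_comb vs d"
  unfolding lin_comb_def by auto

lemma lin_comb_add:
  "lin_comb vs (\<lambda>j. c j + d j) = (\<lambda>i. lin_comb vs c i + lin_comb vs d i)"
  unfolding lin_comb_def by (auto simp: algebra_simps sum.distrib)

lemma lin_comb_smult:
  "lin_comb vs (\<lambda>j. a * c j) = (\<lambda>i. a * lin_comb vs c i)"
  unfolding lin_comb_def by (auto simp: algebra_simps sum_distrib_left)

lemma lspan_add: "u \<in> lspan vs \<Longrightarrow> w \<in> lspan vs \<Longrightarrow> (\<lambda>i. u i + w i) \<in> lspan vs"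
  unfolding lspan_def by (auto simp: lin_comb_add[symmetric])

lemma lspan_smult: "u \<in> lspan vs \<Longrightarrow> (\<lambda>i. a * u i) \<in> lspan vs"
  unfolding lspan_def by (auto simp: lin_comb_smult[symmetric])

lemma lspan_diff: "u \<in> lspan vs \<Longrightarrow> w \<in> lspan vs \<Longrightarrow> (\<lambda>i. u i - w i) \<in> lspan vs"
proof -
  assume "u \<in> lspan vs" "w \<in> lspan vs"
  then have "(\<lambda>i. u i + (-1) * w i) \<in> lspan vs" by (intro lspan_add lspan_smult)
  then show ?thesis by simp
qed

lemma lspan_nth: "j < length vs \<Longrightarrow> vs ! j \<in> lspan vs"
proof -
  assume j: "j < length vs"
  have "lin_comb vs (\<lambda>l. if l = j then 1 else 0) = vs ! j"
    unfolding lin_comb_def using j by (auto simp: if_distrib[where f="\<lambda>a. a * _"] sum.delta cong: if_cong)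
  then show ?thesis unfolding lspan_def by (metis (mono_tags, lifting) mem_Collect_eq)
qed

lemma lspan_append_mono: "lspan xs \<subseteq> lspan (xs @ [x])"
proof
  fix u assume "u \<in> lspan xs"
  then obtain c where u: "u = lin_comb xs c" unfolding lspan_def by auto
  have "lin_comb (xs @ [x]) (c(length xs := 0)) = lin_comb xs (c(length xs := 0))"
    unfolding lin_comb_append by auto
  also have "\<dots> = u" unfolding u by (rule lin_comb_cong) auto
  finally show "u \<in> lspan (xs @ [x])" unfolding lspan_def by (metis (mono_tags, lifting) mem_Collect_eq)
qed

lemma lspan_in_Fn: "(\<forall>v\<in>set vs. in_Fn n v) \<Longrightarrow> u \<in> lspan vs \<Longrightarrow> in_Fn n u"
  unfolding lspan_def lin_comb_def in_Fn_def by (auto intro!: sum.neutral)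

lemma lin_indep_append:
  assumes ind: "lin_indep xs" and x: "x \<notin> lspan xs"
  shows "lin_indep (xs @ [x])"
  unfolding lin_indep_def
proof (intro allI impI)
  fix c j
  assume z: "lin_comb (xs @ [x]) c = (\<lambda>_. 0)" and j: "j < length (xs @ [x])"
  let ?m = "length xs"
  have z': "\<And>i. lin_comb xs c i + c ?m * x i = 0" using z unfolding lin_comb_append by meson
  have cm: "c ?m = 0"
  proof (rule ccontr)
    assume ne: "c ?m \<noteq> 0"
    have "lin_comb xs (\<lambda>l. (- 1 / c ?m) * c l) = x"
    proof
      fix i show "lin_comb xs (\<lambda>l. (- 1 / c ?m) * c l) i = x i"
        unfolding lin_comb_smult using z'[of i] ne by (auto simp: field_simps add_eq_0_iff)
    qed
    then have "x \<in> lspan xs" unfolding lspan_def by (metis (mono_tags, lifting) mem_Collect_eq)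
    with x show False by simp
  qed
  have "lin_comb xs c = (\<lambda>_. 0)" using z' cm by auto
  then have "\<forall>l<?m. c l = 0" using ind unfolding lin_indep_def by blast
  then show "c j = 0" using j cm by (cases "j < ?m") (auto simp: less_Suc_eq)
qed

lemma det_zero_row:
  assumes A: "(A :: 'a :: comm_ring_1 mat) \<in> carrier_mat n n" and k: "k < n"
    and z: "\<And>j. j < n \<Longrightarrow> A $$ (k, j) = 0"
  shows "det A = 0"
  using laplace_expansion_row[OF A k] z by simp

lemma det_zero_col:
  assumes A: "(A :: 'a :: comm_ring_1 mat) \<in> carrier_mat n n" and k: "k < n"
    and z: "\<And>i. i < n \<Longrightarrow> A $$ (i, k) = 0"
  shows "det A = 0"
proof -
  have "det (transpose_mat A) = 0"
    by (rule det_zero_row[of _ n k]) (use A k z in auto)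
  then show ?thesis using det_transpose[OF A] by simp
qed

lemma pluecker_mult:
  fixes ws ys :: "(nat \<Rightarrow> 'a::field) list"
  assumes lw: "length ws = m" and ly: "length ys = m" and A: "A \<in> carrier_mat m m"
    and rel: "\<And>i. i < m \<Longrightarrow> ws ! i = lin_comb ys (\<lambda>j. A $$ (i, j))"
  shows "pluecker ws S = det A * pluecker ys S"
proof -
  let ?s = "sorted_list_of_set S"
  let ?Y = "mat m m (\<lambda>(i, j). (ys ! i) (?s ! j))"
  have "mat m m (\<lambda>(i, j). (ws ! i) (?s ! j)) = A * ?Y"
  proof (rule eq_matI)
    fix i j assume i: "i < dim_row (A * ?Y)" and j: "j < dim_col (A * ?Y)"
    then have i': "i < m" and j': "j < m" using A by auto
    have "(A * ?Y) $$ (i, j) = (\<Sum>l = 0..<m. A $$ (i, l) * (ys ! l) (?s ! j))"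
      using i' j' A by (simp add: scalar_prod_def)
    also have "\<dots> = (ws ! i) (?s ! j)"
      using rel[OF i'] ly unfolding lin_comb_def by (simp add: atLeast0LessThan)
    finally show "mat m m (\<lambda>(i, j). (ws ! i) (?s ! j)) $$ (i, j) = (A * ?Y) $$ (i, j)"
      using i' j' by simp
  qed (use A in auto)
  then show ?thesis unfolding pluecker_def lw ly
    by (simp add: det_mult[OF A, of ?Y])
qed

lemma det_nonzero_of_indep:
  fixes ws ys :: "(nat \<Rightarrow> 'a::field) list"
  assumes ind: "lin_indep ws" and lw: "length ws = m" and ly: "length ys = m"
    and A: "A \<in> carrier_mat m m"
    and rel: "\<And>i. i < m \<Longrightarrow> ws ! i = lin_comb ys (\<lambda>j. A $$ (i, j))"
  shows "det A \<noteq> 0"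
proof
  assume "det A = 0"
  then have "det (transpose_mat A) = 0" using det_transpose[OF A] by simp
  then obtain v where v: "v \<in> carrier_vec m" "v \<noteq> 0\<^sub>v m" "transpose_mat A *\<^sub>v v = 0\<^sub>v m"
    using det_0_iff_vec_prod_zero_field[of "transpose_mat A" m] A by auto
  have col: "(\<Sum>i<m. A $$ (i, j) * v $ i) = 0" if j: "j < m" for j
  proof -
    have "(transpose_mat A *\<^sub>v v) $ j = 0" using v(3) j by simp
    then show ?thesis using j A v(1)
      by (simp add: scalar_prod_def atLeast0LessThan mult.commute)
  qed
  have "lin_comb ws (\<lambda>i. v $ i) = (\<lambda>_. 0)"
  proof
    fix t
    have "lin_comb ws (\<lambda>i. v $ i) t = (\<Sum>i<m. v $ i * (\<Sum>j<m. A $$ (i, j) * (ys ! j) t))"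
      unfolding lin_comb_def lw using rel ly by (auto simp: lin_comb_def intro!: sum.cong)
    also have "\<dots> = (\<Sum>i<m. \<Sum>j<m. A $$ (i, j) * v $ i * (ys ! j) t)"
      by (simp add: sum_distrib_left mult.assoc mult.left_commute)
    also have "\<dots> = (\<Sum>j<m. \<Sum>i<m. A $$ (i, j) * v $ i * (ys ! j) t)"
      by (rule sum.swap)
    also have "\<dots> = (\<Sum>j<m. (\<Sum>i<m. A $$ (i, j) * v $ i) * (ys ! j) t)"
      by (simp add: sum_distrib_right)
    also have "\<dots> = 0" using col by simp
    finally show "lin_comb ws (\<lambda>i. v $ i) t = 0" .
  qed
  then have "\<forall>i<m. v $ i = 0" using ind lw unfolding lin_indep_def by blast
  then have "v = 0\<^sub>v m" using v(1) by (intro eq_vecI) auto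
  with v(2) show False by simp
qed

lemma coeff_mat_exists:
  fixes ws ys :: "(nat \<Rightarrow> 'a::field) list"
  assumes "\<And>i. i < m \<Longrightarrow> ws ! i \<in> lspan ys" and ly: "length ys = m"
  shows "\<exists>A \<in> carrier_mat m m. \<forall>i<m. ws ! i = lin_comb ys (\<lambda>j. A $$ (i, j))"
proof -
  have "\<forall>i. \<exists>c. i < m \<longrightarrow> ws ! i = lin_comb ys c" using assms(1) unfolding lspan_def by blast
  then obtain C where C: "\<And>i. i < m \<Longrightarrow> ws ! i = lin_comb ys (C i)" by metis
  define A where "A = mat m m (\<lambda>(i, j). C i j)"
  have "\<forall>i<m. ws ! i = lin_comb ys (\<lambda>j. A $$ (i, j))"
  proof (intro allI impI)
    fix i assume i: "i < m"
    show "ws ! i = lin_comb ys (\<lambda>j. A $$ (i, j))"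
      unfolding C[OF i] by (rule lin_comb_cong) (use i ly in \<open>auto simp: A_def\<close>)
  qed
  moreover have "A \<in> carrier_mat m m" unfolding A_def by simp
  ultimately show ?thesis by blast
qed

lemma pluecker_change:
  fixes ws ys :: "(nat \<Rightarrow> 'a::field) list"
  assumes ind: "lin_indep ws" and lw: "length ws = m" and ly: "length ys = m"
    and sp: "\<And>i. i < m \<Longrightarrow> ws ! i \<in> lspan ys"
  shows "\<exists>d. d \<noteq> 0 \<and> (\<forall>S. pluecker ws S = d * pluecker ys S)"
proof -
  obtain A where A: "A \<in> carrier_mat m m" "\<forall>i<m. ws ! i = lin_comb ys (\<lambda>j. A $$ (i, j))"
    using coeff_mat_exists[OF sp ly] by blast
  show ?thesis using det_nonzero_of_indep[OF ind lw ly A(1)] pluecker_mult[OF lw ly A(1)] A(2) by blast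
qed

lemma pluecker_zero_transfer:
  fixes ws ys :: "(nat \<Rightarrow> 'a::field) list"
  assumes lw: "length ws = m" and ly: "length ys = m"
    and sp: "\<And>i. i < m \<Longrightarrow> ws ! i \<in> lspan ys"
  shows "\<exists>d. \<forall>S. pluecker ws S = d * pluecker ys S"
proof -
  obtain A where A: "A \<in> carrier_mat m m" "\<forall>i<m. ws ! i = lin_comb ys (\<lambda>j. A $$ (i, j))"
    using coeff_mat_exists[OF sp ly] by blast
  show ?thesis using pluecker_mult[OF lw ly A(1)] A(2) by blast
qed

lemma too_many_indep:
  fixes ws ys :: "(nat \<Rightarrow> 'a::field) list"
  assumes ind: "lin_indep ws" and lw: "length ws = Suc m" and ly: "length ys = m"
    and sp: "\<And>i. i < Suc m \<Longrightarrow> ws ! i \<in> lspan ys"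
  shows False
proof -
  have "\<forall>i. \<exists>c. i < Suc m \<longrightarrow> ws ! i = lin_comb ys c" using sp unfolding lspan_def by blast
  then obtain C where C: "\<And>i. i < Suc m \<Longrightarrow> ws ! i = lin_comb ys (C i)" by metis
  define A where "A = mat (Suc m) (Suc m) (\<lambda>(i, j). if j < m then C i j else 0)"
  have A: "A \<in> carrier_mat (Suc m) (Suc m)" unfolding A_def by simp
  have rel: "\<forall>i<Suc m. ws ! i = lin_comb (ys @ [\<lambda>_. 0]) (\<lambda>j. A $$ (i, j))"
  proof (intro allI impI)
    fix i assume i: "i < Suc m"
    have "lin_comb (ys @ [\<lambda>_. 0]) (\<lambda>j. A $$ (i, j)) = lin_comb ys (\<lambda>j. A $$ (i, j))"
      unfolding lin_comb_append by simp
    also have "\<dots> = lin_comb ys (C i)"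
      by (rule lin_comb_cong) (use i ly in \<open>auto simp: A_def\<close>)
    finally show "ws ! i = lin_comb (ys @ [\<lambda>_. 0]) (\<lambda>j. A $$ (i, j))" using C[OF i] by simp
  qed
  have "det A \<noteq> 0" by (rule det_nonzero_of_indep[OF ind lw _ A]) (use rel ly in auto)
  moreover have "det A = 0"
    by (rule det_zero_col[OF A, of m]) (auto simp: A_def)
  ultimately show False by simp
qed

lemma sorted_list_max_split:
  assumes fin: "finite S" and a: "a \<in> S" and le: "\<And>x. x \<in> S \<Longrightarrow> x \<le> (a::nat)"
  shows "sorted_list_of_set S = sorted_list_of_set (S - {a}) @ [a]"
proof -
  let ?l = "sorted_list_of_set (S - {a}) @ [a]"
  have s: "sorted_wrt (<) ?l"
    using fin le by (auto simp: sorted_wrt_append le_neq_implies_less)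
  have st: "set ?l = S" using fin a by auto
  have "distinct ?l" using fin by simp
  then have ln: "length ?l = card S" using st by (metis distinct_card)
  show ?thesis using sorted_list_of_set_unique[of S ?l] s st ln fin by auto
qed

lemma pluecker_append_e:
  fixes vs :: "(nat \<Rightarrow> 'a::field) list"
  assumes lv: "length vs = Suc m" and S: "S \<subseteq> {..Suc p}" and cS: "card S = Suc (Suc m)"
  shows "pluecker (vs @ [\<lambda>i. if i = Suc p then 1 else 0]) S
       = (if Suc p \<in> S then pluecker vs (S - {Suc p}) else 0)"
proof -
  let ?e = "\<lambda>i. if i = Suc p then (1::'a) else 0"
  let ?s = "sorted_list_of_set S"
  let ?M = "mat (Suc (Suc m)) (Suc (Suc m)) (\<lambda>(i, j). ((vs @ [?e]) ! i) (?s ! j))"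
  have fin: "finite S" using S finite_subset by blast
  have ls: "length ?s = Suc (Suc m)" using cS by simp
  have sS: "\<And>j. j < Suc (Suc m) \<Longrightarrow> ?s ! j \<in> S"
    using ls fin by (metis nth_mem set_sorted_list_of_set)
  have M: "?M \<in> carrier_mat (Suc (Suc m)) (Suc (Suc m))" by simp
  have lastrow: "?M $$ (Suc m, j) = ?e (?s ! j)" if "j < Suc (Suc m)" for j
    using that lv by (simp add: nth_append)
  have det: "det ?M = (\<Sum>j<Suc (Suc m). ?e (?s ! j) * cofactor ?M (Suc m) j)"
    using laplace_expansion_row[OF M, of "Suc m"] lastrow by simp
  have pl: "pluecker (vs @ [?e]) S = det ?M" unfolding pluecker_def using lv by simp
  show ?thesis
  proof (cases "Suc p \<in> S")
    case False
    then have "\<And>j. j < Suc (Suc m) \<Longrightarrow> ?e (?s ! j) = 0" using sS by fastforce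
    then have "det ?M = 0" unfolding det by (intro sum.neutral) simp
    with pl have "pluecker (vs @ [?e]) S = 0" by (rule trans)
    then show ?thesis using False by (simp only: if_not_P[OF False] if_False)
  next
    case True
    let ?s' = "sorted_list_of_set (S - {Suc p})"
    have split: "?s = ?s' @ [Suc p]"
      by (rule sorted_list_max_split[OF fin True]) (use S in auto)
    have ls': "length ?s' = Suc m" using ls split by simp
    have ej: "?e (?s ! j) = (if j = Suc m then 1 else 0)" if j: "j < Suc (Suc m)" for j
    proof (cases "j = Suc m")
      case True then show ?thesis using split ls' by (simp add: nth_append)
    next
      case False
      then have "j < Suc m" using j by simp
      then have j': "j < length ?s'" using ls' by simp
      have "?s ! j = ?s' ! j" using split j' by (simp add: nth_append)
      moreover have "?s' ! j \<in> set ?s'" using j' by (rule nth_mem)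
      ultimately have "?s ! j = ?s' ! j" "?s' ! j \<in> S - {Suc p}" using fin by auto
      then show ?thesis using False by auto
    qed
    have "det ?M = (\<Sum>j<Suc (Suc m). (if j = Suc m then cofactor ?M (Suc m) j else 0))"
      unfolding det by (rule sum.cong) (auto simp: ej)
    also have "\<dots> = cofactor ?M (Suc m) (Suc m)"
      by (subst sum.delta) auto
    also have "\<dots> = det (mat_delete ?M (Suc m) (Suc m))"
      unfolding cofactor_def by simp
    also have "mat_delete ?M (Suc m) (Suc m) = mat (Suc m) (Suc m) (\<lambda>(i, j). (vs ! i) (?s' ! j))"
    proof (rule eq_matI)
      fix i j assume i: "i < dim_row (mat (Suc m) (Suc m) (\<lambda>(i, j). (vs ! i) (?s' ! j)))"
        and j: "j < dim_col (mat (Suc m) (Suc m) (\<lambda>(i, j). (vs ! i) (?s' ! j)))"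
      then have i': "i < Suc m" and j': "j < Suc m" by auto
      have "mat_delete ?M (Suc m) (Suc m) $$ (i, j) = ?M $$ (i, j)"
        unfolding mat_delete_def using i' j' by simp
      also have "\<dots> = ((vs @ [?e]) ! i) (?s ! j)" using i' j' by simp
      also have "\<dots> = (vs ! i) (?s' ! j)"
        using i' j' lv ls' by (simp only: split nth_append) simp
      finally show "mat_delete ?M (Suc m) (Suc m) $$ (i, j) = mat (Suc m) (Suc m) (\<lambda>(i, j). (vs ! i) (?s' ! j)) $$ (i, j)"
        using i' j' by simp
    qed (simp_all add: mat_delete_def)
    finally have "det ?M = pluecker vs (S - {Suc p})" unfolding pluecker_def lv .
    with pl have "pluecker (vs @ [?e]) S = pluecker vs (S - {Suc p})" by (rule trans)
    then show ?thesis by (simp only: if_P[OF True])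
  qed
qed

definition Fc :: "nat \<Rightarrow> nat \<Rightarrow> (nat set \<Rightarrow> 'a::field) \<Rightarrow> (nat \<Rightarrow> 'a) list \<Rightarrow> 'a" where
  "Fc n h c vs = (\<Sum>S\<in>wedge_index n h. c S * pluecker vs S)"

lemma finite_wedge_index: "finite (wedge_index n h)"
  unfolding wedge_index_def by (rule finite_subset[of _ "Pow {..n}"]) auto

lemma wedge_index_split:
  "{S \<in> wedge_index (Suc p) (Suc m). Suc p \<in> S} = insert (Suc p) ` wedge_index p m"
proof
  show "{S \<in> wedge_index (Suc p) (Suc m). Suc p \<in> S} \<subseteq> insert (Suc p) ` wedge_index p m"
  proof
    fix S assume S: "S \<in> {S \<in> wedge_index (Suc p) (Suc m). Suc p \<in> S}"
    then have fin: "finite S" unfolding wedge_index_def using finite_subset by blast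
    have "S - {Suc p} \<in> wedge_index p m"
      using S fin unfolding wedge_index_def by (auto simp: le_Suc_eq)
    moreover have "S = insert (Suc p) (S - {Suc p})" using S by auto
    ultimately show "S \<in> insert (Suc p) ` wedge_index p m" by blast
  qed
next
  show "insert (Suc p) ` wedge_index p m \<subseteq> {S \<in> wedge_index (Suc p) (Suc m). Suc p \<in> S}"
  proof
    fix S assume "S \<in> insert (Suc p) ` wedge_index p m"
    then obtain T where T: "T \<in> wedge_index p m" "S = insert (Suc p) T" by blast
    then have fin: "finite T" unfolding wedge_index_def using finite_subset by blast
    have "Suc p \<notin> T" using T unfolding wedge_index_def by auto
    then show "S \<in> {S \<in> wedge_index (Suc p) (Suc m). Suc p \<in> S}"
      using T fin unfolding wedge_index_def by auto
  qed
qed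

lemma Fc_append_e:
  fixes vs :: "(nat \<Rightarrow> 'a::field) list"
  assumes lv: "length vs = Suc m"
  shows "Fc (Suc p) (Suc m) c (vs @ [\<lambda>i. if i = Suc p then 1 else 0])
       = Fc p m (\<lambda>T. c (insert (Suc p) T)) vs"
proof -
  let ?e = "\<lambda>i. if i = Suc p then (1::'a) else 0"
  have "Fc (Suc p) (Suc m) c (vs @ [?e])
      = (\<Sum>S\<in>wedge_index (Suc p) (Suc m). if Suc p \<in> S then c S * pluecker vs (S - {Suc p}) else 0)"
    unfolding Fc_def
  proof (rule sum.cong[OF refl])
    fix S assume "S \<in> wedge_index (Suc p) (Suc m)"
    then have S: "S \<subseteq> {..Suc p}" "card S = Suc (Suc m)" unfolding wedge_index_def by auto
    show "c S * pluecker (vs @ [?e]) S = (if Suc p \<in> S then c S * pluecker vs (S - {Suc p}) else 0)"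
      unfolding pluecker_append_e[OF lv S] by simp
  qed
  also have "\<dots> = (\<Sum>S\<in>{S \<in> wedge_index (Suc p) (Suc m). Suc p \<in> S}. c S * pluecker vs (S - {Suc p}))"
    by (rule sum.inter_filter[OF finite_wedge_index, symmetric])
  also have "\<dots> = (\<Sum>S\<in>insert (Suc p) ` wedge_index p m. c S * pluecker vs (S - {Suc p}))"
    unfolding wedge_index_split ..
  also have "\<dots> = (\<Sum>T\<in>wedge_index p m. c (insert (Suc p) T) * pluecker vs (insert (Suc p) T - {Suc p}))"
  proof (rule sum.reindex[unfolded comp_def])
    show "inj_on (insert (Suc p)) (wedge_index p m)"
    proof (rule inj_onI)
      fix S T assume S: "S \<in> wedge_index p m" and T: "T \<in> wedge_index p m"
        and eq: "insert (Suc p) S = insert (Suc p) T"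
      have "Suc p \<notin> S" "Suc p \<notin> T" using S T unfolding wedge_index_def by auto
      then have "S = insert (Suc p) S - {Suc p}" "T = insert (Suc p) T - {Suc p}" by auto
      then show "S = T" using eq by simp
    qed
  qed
  also have "\<dots> = Fc p m (\<lambda>T. c (insert (Suc p) T)) vs"
    unfolding Fc_def
  proof (rule sum.cong[OF refl])
    fix T assume "T \<in> wedge_index p m"
    then have "Suc p \<notin> T" unfolding wedge_index_def by auto
    then have "insert (Suc p) T - {Suc p} = T" by simp
    then show "c (insert (Suc p) T) * pluecker vs (insert (Suc p) T - {Suc p}) = c (insert (Suc p) T) * pluecker vs T"
      by simp
  qed
  finally show ?thesis .
qed

lemma Fc_scale: "(\<forall>S. pluecker ws S = d * pluecker vs S) \<Longrightarrow> Fc n h c ws = d * Fc n h c vs"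
  unfolding Fc_def by (simp add: sum_distrib_left algebra_simps)

lemma in_Fn_mono: "in_Fn p v \<Longrightarrow> p \<le> q \<Longrightarrow> in_Fn q v"
  unfolding in_Fn_def by auto

lemma e_notin_lspan:
  assumes "\<forall>v\<in>set vs. in_Fn p v"
  shows "(\<lambda>i. if i = Suc p then (1::'a::field) else 0) \<notin> lspan vs"
proof
  assume "(\<lambda>i. if i = Suc p then (1::'a) else 0) \<in> lspan vs"
  then have "in_Fn p (\<lambda>i. if i = Suc p then (1::'a) else 0)" using lspan_in_Fn assms by blast
  then show False unfolding in_Fn_def by (metis lessI one_neq_zero)
qed

lemma key_singular:
  fixes us :: "(nat \<Rightarrow> 'a::field) list" and c :: "nat set \<Rightarrow> 'a"
  assumes lu: "length us = m" and indus: "lin_indep us" and inus: "\<forall>v\<in>set us. in_Fn p v"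
    and hyp: "\<And>x. in_Fn p x \<Longrightarrow> x \<notin> lspan us \<Longrightarrow> Fc p m (\<lambda>T. c (insert (Suc p) T)) (us @ [x]) = 0"
  shows "singular (Suc p) (Suc m)
           {W. \<exists>vs. is_basis (Suc p) (Suc m) vs W \<and> Fc (Suc p) (Suc m) c vs = 0}
           (lspan (us @ [\<lambda>i. if i = Suc p then 1 else 0]))"
proof -
  let ?e = "\<lambda>i. if i = Suc p then (1::'a) else 0"
  let ?U = "lspan (us @ [?e])"
  have ind1: "lin_indep (us @ [?e])" by (rule lin_indep_append[OF indus e_notin_lspan[OF inus]])
  have inFn1: "\<forall>v\<in>set (us @ [?e]). in_Fn (Suc p) v"
    using inus unfolding in_Fn_def by auto
  have ps: "proj_subspace (Suc p) (Suc m - 1) ?U"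
    unfolding proj_subspace_def is_basis_def
    by (rule exI[of _ "us @ [?e]"]) (use ind1 inFn1 lu in simp)
  have eU: "?e \<in> ?U" using lspan_nth[of "length us" "us @ [?e]"] by simp
  have usU: "us ! j \<in> ?U" if "j < m" for j
    using lspan_nth[of j "us @ [?e]"] lu that by (simp add: nth_append)
  show ?thesis unfolding singular_def
  proof (intro conjI allI impI ps)
    fix W assume asm: "proj_subspace (Suc p) (Suc m) W \<and> ?U \<subseteq> W"
    then obtain ws where ws: "length ws = Suc (Suc m)" "\<forall>v\<in>set ws. in_Fn (Suc p) v"
      "lin_indep ws" "W = lspan ws" unfolding proj_subspace_def is_basis_def by auto
    have UW: "?U \<subseteq> W" using asm by blast
    obtain i where i: "i < Suc (Suc m)" "ws ! i \<notin> ?U"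
    proof (rule ccontr)
      assume "\<not> thesis"
      then have "\<And>i. i < Suc (Suc m) \<Longrightarrow> ws ! i \<in> ?U" using that by blast
      then show False using too_many_indep[OF ws(3) ws(1), of "us @ [?e]"] lu by simp
    qed
    define w where "w = ws ! i"
    define x where "x = (\<lambda>t. w t - w (Suc p) * ?e t)"
    have wW: "w \<in> W" unfolding w_def ws(4) by (rule lspan_nth) (use i ws(1) in simp)
    have xW: "x \<in> W" unfolding x_def using wW UW eU ws(4)
      by (metis (no_types) lspan_diff lspan_smult subsetD)
    have xU: "x \<notin> ?U"
    proof
      assume "x \<in> ?U"
      then have "(\<lambda>t. x t + w (Suc p) * ?e t) \<in> ?U" using eU lspan_add lspan_smult by blast
      moreover have "(\<lambda>t. x t + w (Suc p) * ?e t) = w" unfolding x_def by auto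
      ultimately show False using i(2) w_def by simp
    qed
    have winFn: "in_Fn (Suc p) w" using ws(2) i ws(1) unfolding w_def by simp
    have xFn: "in_Fn p x" unfolding in_Fn_def
    proof (intro allI impI)
      fix t assume "p < t"
      then consider "t = Suc p" | "Suc p < t" by linarith
      then show "x t = 0"
        by cases (use winFn in \<open>auto simp: x_def in_Fn_def\<close>)
    qed
    have xus: "x \<notin> lspan us" using xU lspan_append_mono by blast
    have F0: "Fc p m (\<lambda>T. c (insert (Suc p) T)) (us @ [x]) = 0" by (rule hyp[OF xFn xus])
    let ?zs = "(us @ [x]) @ [?e]"
    have Fz: "Fc (Suc p) (Suc m) c ?zs = 0"
      using Fc_append_e[of "us @ [x]" m p c] lu F0 by simp
    have ind2: "lin_indep (us @ [x])" by (rule lin_indep_append[OF indus xus])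
    have inFn2: "\<forall>v\<in>set (us @ [x]). in_Fn p v" using inus xFn by auto
    have ind3: "lin_indep ?zs" by (rule lin_indep_append[OF ind2 e_notin_lspan[OF inFn2]])
    have zW: "?zs ! j \<in> lspan ws" if j: "j < Suc (Suc m)" for j
    proof -
      consider "j < m" | "j = m" | "j = Suc m" using j by linarith
      then show ?thesis
      proof cases
        case 1 then show ?thesis using usU[OF 1] UW ws(4) lu by (auto simp: nth_append)
      next
        case 2 then show ?thesis using xW ws(4) lu by (auto simp: nth_append)
      next
        case 3 then show ?thesis using eU UW ws(4) lu by (auto simp: nth_append)
      qed
    qed
    obtain d where d: "d \<noteq> 0" "\<forall>S. pluecker ?zs S = d * pluecker ws S"
      using pluecker_change[OF ind3 _ ws(1) zW] lu by auto
    have "Fc (Suc p) (Suc m) c ws = 0" using Fc_scale[OF d(2), of "Suc p" "Suc m" c] Fz d(1) by simp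
    then show "W \<in> {W. \<exists>vs. is_basis (Suc p) (Suc m) vs W \<and> Fc (Suc p) (Suc m) c vs = 0}"
      using ws unfolding is_basis_def by auto
  qed
qed

lemma std_basis:
  assumes "m \<le> p"
  shows "\<exists>us :: (nat \<Rightarrow> 'a::field) list. length us = m \<and> lin_indep us \<and> (\<forall>v\<in>set us. in_Fn p v)"
proof -
  let ?us = "map (\<lambda>j t. if t = j then (1::'a) else 0) [0..<m]"
  have "lin_indep ?us" unfolding lin_indep_def
  proof (intro allI impI)
    fix c j assume z: "lin_comb ?us c = (\<lambda>_. 0)" and j: "j < length ?us"
    have "lin_comb ?us c j = (\<Sum>l<m. c l * (if j = l then 1 else 0))"
      unfolding lin_comb_def by simp
    also have "\<dots> = c j" using j by (simp add: if_distrib[where f="\<lambda>a. _ * a"] cong: if_cong)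
    finally show "c j = 0" using z by metis
  qed
  moreover have "\<forall>v\<in>set ?us. in_Fn p v" using assms unfolding in_Fn_def by auto
  ultimately show ?thesis by (intro exI[of _ ?us]) simp
qed

lemma step:
  fixes K :: "(nat \<Rightarrow> 'a::field) set set"
  assumes m1: "1 \<le> m" and mp: "Suc m \<le> p"
    and lc: "linear_complex (Suc p) (Suc m) K" and ns: "\<forall>U. \<not> singular (Suc p) (Suc m) K U"
  shows "\<exists>K' :: (nat \<Rightarrow> 'a) set set. linear_complex p m K' \<and> (\<forall>U. \<not> singular p m K' U)"
proof -
  obtain c :: "nat set \<Rightarrow> 'a" where c: "\<exists>S\<in>wedge_index (Suc p) (Suc m). c S \<noteq> 0"
    and K: "K = {W. \<exists>vs. is_basis (Suc p) (Suc m) vs W \<and> Fc (Suc p) (Suc m) c vs = 0}"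
    using lc unfolding linear_complex_def Fc_def by blast
  define c' where "c' = (\<lambda>T. c (insert (Suc p) T))"
  define K' where "K' = {W. \<exists>vs. is_basis p m vs W \<and> (\<Sum>S\<in>wedge_index p m. c' S * pluecker vs S) = 0}"
  have K'F: "K' = {W. \<exists>vs. is_basis p m vs W \<and> Fc p m c' vs = 0}"
    unfolding K'_def Fc_def ..
  have nz: "\<exists>S\<in>wedge_index p m. c' S \<noteq> 0"
  proof (rule ccontr)
    assume "\<not> ?thesis"
    then have z: "\<And>vs. Fc p m c' vs = 0" unfolding Fc_def by auto
    obtain us :: "(nat \<Rightarrow> 'a) list" where us: "length us = m" "lin_indep us" "\<forall>v\<in>set us. in_Fn p v"
      using std_basis[of m p] mp by auto
    have "singular (Suc p) (Suc m) K (lspan (us @ [\<lambda>i. if i = Suc p then 1 else 0]))"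
      unfolding K by (rule key_singular[OF us]) (use z in \<open>simp add: c'_def\<close>)
    with ns show False by blast
  qed
  have nsing: "\<not> singular p m K' U" for U
  proof
    assume sg: "singular p m K' U"
    then obtain us where us: "length us = m" "\<forall>v\<in>set us. in_Fn p v" "lin_indep us" "U = lspan us"
      unfolding singular_def proj_subspace_def is_basis_def using m1 by auto
    have hyp: "Fc p m c' (us @ [x]) = 0" if x: "in_Fn p x" "x \<notin> lspan us" for x
    proof -
      let ?W = "lspan (us @ [x])"
      have ind: "lin_indep (us @ [x])" by (rule lin_indep_append[OF us(3) x(2)])
      have bas: "is_basis p m (us @ [x]) ?W"
        unfolding is_basis_def using ind us(1,2) x(1) by auto
      have "proj_subspace p m ?W \<and> U \<subseteq> ?W"
        using bas lspan_append_mono us(4) unfolding proj_subspace_def by blast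
      then have "?W \<in> K'" using sg unfolding singular_def by blast
      then obtain vs where vs: "is_basis p m vs ?W" "Fc p m c' vs = 0" unfolding K'F by blast
      have sp: "\<And>i. i < Suc m \<Longrightarrow> (us @ [x]) ! i \<in> lspan vs"
      proof -
        fix i assume i: "i < Suc m"
        have "(us @ [x]) ! i \<in> ?W" by (rule lspan_nth) (use i us(1) in simp)
        then show "(us @ [x]) ! i \<in> lspan vs" using vs(1) unfolding is_basis_def by simp
      qed
      obtain d where "\<forall>S. pluecker (us @ [x]) S = d * pluecker vs S"
        using pluecker_zero_transfer[OF _ _ sp] us(1) vs(1) unfolding is_basis_def by auto
      then show ?thesis using Fc_scale vs(2) by (metis mult_zero_right)
    qed
    have "singular (Suc p) (Suc m) K (lspan (us @ [\<lambda>i. if i = Suc p then 1 else 0]))"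
      unfolding K by (rule key_singular[OF us(1,3,2)]) (use hyp in \<open>simp add: c'_def\<close>)
    with ns show False by blast
  qed
  have "linear_complex p m K'" unfolding linear_complex_def K'_def using nz by blast
  with nsing show ?thesis by blast
qed

lemma iter:
  assumes "1 \<le> k" and "k + d + 1 \<le> n"
    and "\<exists>K :: (nat \<Rightarrow> 'a::field) set set. linear_complex n (k + d) K \<and> (\<forall>U. \<not> singular n (k + d) K U)"
  shows "\<exists>K :: (nat \<Rightarrow> 'a) set set. linear_complex (n - d) k K \<and> (\<forall>U. \<not> singular (n - d) k K U)"
  using assms(2,3)
proof (induction d arbitrary: n)
  case 0 then show ?case by simp
next
  case (Suc d)
  obtain p where n: "n = Suc p" using Suc.prems(1) by (cases n) auto
  obtain K :: "(nat \<Rightarrow> 'a) set set" where K: "linear_complex (Suc p) (Suc (k + d)) K"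
    "\<forall>U. \<not> singular (Suc p) (Suc (k + d)) K U" using Suc.prems(2) n by auto
  have "\<exists>K' :: (nat \<Rightarrow> 'a) set set. linear_complex p (k + d) K' \<and> (\<forall>U. \<not> singular p (k + d) K' U)"
    by (rule step[OF _ _ K]) (use assms(1) Suc.prems(1) n in auto)
  then have "\<exists>K :: (nat \<Rightarrow> 'a) set set. linear_complex (p - d) k K \<and> (\<forall>U. \<not> singular (p - d) k K U)"
    by (rule Suc.IH[rotated]) (use Suc.prems(1) n in auto)
  then show ?case using n by simp
qed

theorem proposition6p1:
  fixes k h n :: nat
  assumes "1 \<le> k" and "k \<le> h" and "h + 1 \<le> n"
    and "\<exists>K :: (nat \<Rightarrow> 'a::field) set set.
           linear_complex n h K \<and> (\<forall>U. \<not> singular n h K U)"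
  shows "\<exists>K :: (nat \<Rightarrow> 'a) set set.
           linear_complex (n + k - h) k K \<and> (\<forall>U. \<not> singular (n + k - h) k K U)"
proof -
  have h: "h = k + (h - k)" using assms(2) by simp
  have "\<exists>K :: (nat \<Rightarrow> 'a) set set. linear_complex (n - (h - k)) k K \<and> (\<forall>U. \<not> singular (n - (h - k)) k K U)"
    by (rule iter[OF assms(1)]) (use assms(2-4) h in auto)
  moreover have "n - (h - k) = n + k - h" using assms(2,3) by simp
  ultimately show ?thesis by simp
qed

end
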